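(* For any nonempty starting set $S_0\subseteq V$, any integer $T\geq 0$, and any stopping time $\tau$ (with respect to the natural filtration) for the volume-biased evolving set process $(S_t)$ started from $S_0$ with $\tau\leq T$ almost surely, \[ \widehat{\mathbf E}_{S_0}\Big[\frac{\mathrm{cost}(S_0,\dots,S_\tau)}{\mu(S_\tau)}\Big] \leq 1+4\sqrt{T\log\mu(V)}, \] where $\mathrm{cost}(S_0,\dots,S_t)=\mu(S_0)+\sum_{j=1}^{t}\big(\mu(S_j\,\Delta\, S_{j-1})+\partial(S_{j-1})\big)$ and $\Delta$ denotes symmetric difference.
   Context: Let $G=(V,E)$ be a finite simple undirected graph in which every vertex has positive degree $d(x)$. For $S\subseteq V$, $\mu(S)=\sum_{x\in S}d(x)$, $\partial(S)$ is the number of edges with exactly one endpoint in $S$, and $\phi(S)=\partial(S)/\mu(S)$. $\log$ is the natural logarithm. The lazy random walk has transition kernel $p(x,y)=1/(2d(x))$ if $\{x,y\}\in E$, $p(x,x)=1/2$, and $0$ otherwise; $p(x,S)=\sum_{y\in S}p(x,y)$. The evolving set process (ESP): from state $S$, pick $U$ uniform on $[0,1]$ and move to $\{y: p(y,S)\geq U\}$; $K(S,S')$ denotes its transition kernel. The volume-biased ESP is the Markov chain on nonempty subsets with kernel $\widehat K(S,S')=\frac{\mu(S')}{\mu(S)}K(S,S')$; $\widehat{\mathbf E}_{S_0}$ denotes expectation for it started at $S_0$. *)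

theory Defs
  imports "HOL-Analysis.Analysis"
begin

definition simple_graph :: "'a set \<Rightarrow> ('a \<Rightarrow> 'a \<Rightarrow> bool) \<Rightarrow> bool" where
  "simple_graph V E \<longleftrightarrow> finite V \<and> (\<forall>x y. E x y \<longrightarrow> x \<in> V \<and> y \<in> V)
     \<and> (\<forall>x y. E x y \<longrightarrow> E y x) \<and> (\<forall>x. \<not> E x x)"

definition deg :: "'a set \<Rightarrow> ('a \<Rightarrow> 'a \<Rightarrow> bool) \<Rightarrow> 'a \<Rightarrow> nat" where
  "deg V E x = card {y \<in> V. E x y}"

definition vol :: "'a set \<Rightarrow> ('a \<Rightarrow> 'a \<Rightarrow> bool) \<Rightarrow> 'a set \<Rightarrow> real" where
  "vol V E S = (\<Sum>x\<in>S. real (deg V E x))"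

definition bdry :: "'a set \<Rightarrow> ('a \<Rightarrow> 'a \<Rightarrow> bool) \<Rightarrow> 'a set \<Rightarrow> real" where
  "bdry V E S = real (card {(x, y). x \<in> S \<and> y \<in> V - S \<and> E x y})"

definition lazy_p :: "'a set \<Rightarrow> ('a \<Rightarrow> 'a \<Rightarrow> bool) \<Rightarrow> 'a \<Rightarrow> 'a \<Rightarrow> real" where
  "lazy_p V E x y = (if E x y then 1 / (2 * real (deg V E x)) else if x = y then 1/2 else 0)"

definition lazy_pS :: "'a set \<Rightarrow> ('a \<Rightarrow> 'a \<Rightarrow> bool) \<Rightarrow> 'a \<Rightarrow> 'a set \<Rightarrow> real" where
  "lazy_pS V E x S = (\<Sum>y\<in>S. lazy_p V E x y)"

text \<open>Evolving set process kernel: K(S,S') = P(U uniform on [0,1] gives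
{y \<in> V. p(y,S) \<ge> U} = S').\<close>
definition esp_K :: "'a set \<Rightarrow> ('a \<Rightarrow> 'a \<Rightarrow> bool) \<Rightarrow> 'a set \<Rightarrow> 'a set \<Rightarrow> real" where
  "esp_K V E S S' = measure lborel ({0..1} \<inter> {u::real. {y \<in> V. lazy_pS V E y S \<ge> u} = S'})"

definition esp_Khat :: "'a set \<Rightarrow> ('a \<Rightarrow> 'a \<Rightarrow> bool) \<Rightarrow> 'a set \<Rightarrow> 'a set \<Rightarrow> real" where
  "esp_Khat V E S S' = vol V E S' / vol V E S * esp_K V E S S'"

definition paths :: "'a set \<Rightarrow> nat \<Rightarrow> 'a set \<Rightarrow> (nat \<Rightarrow> 'a set) set" where
  "paths V T S0 = PiE {..T} (\<lambda>i. if i = 0 then {S0} else Pow V)"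

definition path_prob :: "'a set \<Rightarrow> ('a \<Rightarrow> 'a \<Rightarrow> bool) \<Rightarrow> nat \<Rightarrow> (nat \<Rightarrow> 'a set) \<Rightarrow> real" where
  "path_prob V E T s = (\<Prod>i\<in>{1..T}. esp_Khat V E (s (i - 1)) (s i))"

definition bounded_stopping_time ::
    "'a set \<Rightarrow> nat \<Rightarrow> 'a set \<Rightarrow> ((nat \<Rightarrow> 'a set) \<Rightarrow> nat) \<Rightarrow> bool" where
  "bounded_stopping_time V T S0 \<tau> \<longleftrightarrow>
     (\<forall>s\<in>paths V T S0. \<tau> s \<le> T) \<and>
     (\<forall>s\<in>paths V T S0. \<forall>s'\<in>paths V T S0. \<forall>t.
        (\<forall>i\<le>t. s i = s' i) \<longrightarrow> (\<tau> s = t \<longleftrightarrow> \<tau> s' = t))"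

definition symdiff :: "'a set \<Rightarrow> 'a set \<Rightarrow> 'a set" where
  "symdiff A B = (A - B) \<union> (B - A)"

definition cost :: "'a set \<Rightarrow> ('a \<Rightarrow> 'a \<Rightarrow> bool) \<Rightarrow> (nat \<Rightarrow> 'a set) \<Rightarrow> nat \<Rightarrow> real" where
  "cost V E s t = vol V E (s 0) +
     (\<Sum>j\<in>{1..t}. vol V E (symdiff (s j) (s (j - 1))) + bdry V E (s (j - 1)))"

definition vb_expect ::
    "'a set \<Rightarrow> ('a \<Rightarrow> 'a \<Rightarrow> bool) \<Rightarrow> nat \<Rightarrow> 'a set \<Rightarrow> ((nat \<Rightarrow> 'a set) \<Rightarrow> real) \<Rightarrow> real" where
  "vb_expect V E T S0 f = (\<Sum>s\<in>paths V T S0. path_prob V E T s * f s)"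

end

theory Submission
  imports Defs
begin


locale sgraph =
  fixes V :: "'a set" and E :: "'a \<Rightarrow> 'a \<Rightarrow> bool"
  assumes sg: "simple_graph V E" and degpos: "\<forall>x\<in>V. deg V E x > 0"
begin

lemma finV: "finite V" using sg by (simp add: simple_graph_def)
lemma EV: "E x y \<Longrightarrow> x \<in> V \<and> y \<in> V" using sg by (simp add: simple_graph_def)
lemma Esym: "E x y \<Longrightarrow> E y x" using sg by (simp add: simple_graph_def)
lemma Eirr: "\<not> E x x" using sg by (simp add: simple_graph_def)

definition nb :: "'a set \<Rightarrow> 'a \<Rightarrow> nat" where "nb S y = card {z\<in>S. E y z}"

lemma deg_split: "S \<subseteq> V \<Longrightarrow> deg V E y = nb S y + nb (V - S) y"
proof -
  assume S: "S \<subseteq> V"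
  have "{z\<in>V. E y z} = {z\<in>S. E y z} \<union> {z\<in>V-S. E y z}" using S by auto
  moreover have "finite {z\<in>S. E y z}" "finite {z\<in>V-S. E y z}" using finV S
    by (auto intro: finite_subset)
  ultimately show ?thesis unfolding deg_def nb_def
    by (simp add: card_Un_disjoint disjoint_iff)
qed

lemma lazy_pS_formula:
  assumes "S \<subseteq> V" "y \<in> V"
  shows "lazy_pS V E y S = real (nb S y) / (2 * real (deg V E y)) + (if y \<in> S then 1/2 else 0)"
proof -
  have fS: "finite S" using finV assms(1) by (rule finite_subset[rotated])
  have "lazy_pS V E y S = (\<Sum>z\<in>S. (if E y z then 1 / (2 * real (deg V E y)) else 0) + (if z = y then 1/2 else 0))"
    unfolding lazy_pS_def lazy_p_def by (rule sum.cong) (auto simp: Eirr)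
  also have "\<dots> = (\<Sum>z\<in>S. (if E y z then 1 / (2 * real (deg V E y)) else 0)) + (\<Sum>z\<in>S. (if z = y then 1/2 else 0))"
    by (rule sum.distrib)
  also have "(\<Sum>z\<in>S. (if E y z then 1 / (2 * real (deg V E y)) else 0)) = real (nb S y) / (2 * real (deg V E y))"
    using fS by (simp add: sum.If_cases nb_def Collect_conj_eq Int_commute Collect_mem_eq)
  also have "(\<Sum>z\<in>S. (if z = y then (1::real)/2 else 0)) = (if y \<in> S then 1/2 else 0)"
    using fS by (simp add: sum.delta')
  finally show ?thesis .
qed

lemma nb_le: "S \<subseteq> V \<Longrightarrow> nb S y \<le> deg V E y"
  using deg_split by force

lemma lazy_pS_bounds:
  assumes "S \<subseteq> V" "y \<in> V"
  shows "0 \<le> lazy_pS V E y S" "lazy_pS V E y S \<le> 1"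
    "y \<in> S \<Longrightarrow> lazy_pS V E y S \<ge> 1/2" "y \<notin> S \<Longrightarrow> lazy_pS V E y S \<le> 1/2"
proof -
  have d: "real (deg V E y) > 0" using degpos assms by auto
  have r: "real (nb S y) / (2 * real (deg V E y)) \<le> 1/2"
    using nb_le[OF assms(1), of y] d by (simp add: divide_simps)
  have r0: "real (nb S y) / (2 * real (deg V E y)) \<ge> 0" using d by simp
  show "0 \<le> lazy_pS V E y S" "lazy_pS V E y S \<le> 1"
    "y \<in> S \<Longrightarrow> lazy_pS V E y S \<ge> 1/2" "y \<notin> S \<Longrightarrow> lazy_pS V E y S \<le> 1/2"
    using r r0 lazy_pS_formula[OF assms] by auto
qed

lemma vol_empty[simp]: "vol V E {} = 0" by (simp add: vol_def)

lemma vol_nonneg: "vol V E S \<ge> 0" by (simp add: vol_def sum_nonneg)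

lemma vol_ge1: "S \<subseteq> V \<Longrightarrow> S \<noteq> {} \<Longrightarrow> vol V E S \<ge> 1"
proof -
  assume S: "S \<subseteq> V" "S \<noteq> {}"
  then obtain x where x: "x \<in> S" by auto
  have fS: "finite S" using finV S(1) by (rule finite_subset[rotated])
  have "vol V E S \<ge> real (deg V E x)" unfolding vol_def
    using fS x by (intro member_le_sum) auto
  moreover have "x \<in> V" using S x by auto
  hence "deg V E x \<ge> 1" using degpos by (simp add: Suc_le_eq)
  ultimately show ?thesis by linarith
qed

lemma vol_mono: "S \<subseteq> S' \<Longrightarrow> S' \<subseteq> V \<Longrightarrow> vol V E S \<le> vol V E S'"
  unfolding vol_def using finV by (intro sum_mono2) (auto intro: finite_subset)

lemma bdry_eq1: "S \<subseteq> V \<Longrightarrow> bdry V E S = (\<Sum>x\<in>S. real (nb (V - S) x))"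
proof -
  assume S: "S \<subseteq> V"
  have fS: "finite S" using finV S by (rule finite_subset[rotated])
  have "{(x, y). x \<in> S \<and> y \<in> V - S \<and> E x y} = Sigma S (\<lambda>x. {y\<in>V-S. E x y})" by auto
  hence "card {(x, y). x \<in> S \<and> y \<in> V - S \<and> E x y} = (\<Sum>x\<in>S. card {y\<in>V-S. E x y})"
    using fS finV by (simp add: card_SigmaI)
  thus ?thesis unfolding bdry_def nb_def by simp
qed

lemma bdry_eq2: "S \<subseteq> V \<Longrightarrow> bdry V E S = (\<Sum>y\<in>V-S. real (nb S y))"
proof -
  assume S: "S \<subseteq> V"
  have fS: "finite S" using finV S by (rule finite_subset[rotated])
  have "{(x, y). x \<in> S \<and> y \<in> V - S \<and> E x y} = prod.swap ` Sigma (V-S) (\<lambda>y. {x\<in>S. E y x})"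
    using Esym by (auto simp: image_iff)
  hence "card {(x, y). x \<in> S \<and> y \<in> V - S \<and> E x y} = card (Sigma (V-S) (\<lambda>y. {x\<in>S. E y x}))"
    by (simp add: card_image)
  also have "\<dots> = (\<Sum>y\<in>V-S. card {x\<in>S. E y x})"
    using fS finV by (simp add: card_SigmaI)
  finally show ?thesis unfolding bdry_def nb_def by simp
qed

lemma bdry_le_vol: "S \<subseteq> V \<Longrightarrow> bdry V E S \<le> vol V E S"
  unfolding bdry_eq1 vol_def using deg_split by (intro sum_mono) force

lemma bdry_nonneg: "bdry V E S \<ge> 0" by (simp add: bdry_def)


definition gS :: "'a set \<Rightarrow> real \<Rightarrow> 'a set" where
  "gS S u = {y\<in>V. lazy_pS V E y S \<ge> u}"

definition KI :: "real set \<Rightarrow> 'a set \<Rightarrow> 'a set \<Rightarrow> real" where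
  "KI I S S' = measure lborel (I \<inter> {u. gS S u = S'})"

lemma esp_K_KI: "esp_K V E S S' = KI {0..1} S S'"
  unfolding esp_K_def KI_def gS_def ..

lemma A_borel: "{u::real. gS S u = S'} \<in> sets borel"
proof (cases "S' \<subseteq> V")
  case True
  have "{u::real. gS S u = S'} = {u::real. \<forall>y\<in>V. (u \<le> lazy_pS V E y S) = (y \<in> S')}"
    using True unfolding gS_def by auto
  also have "\<dots> \<in> sets borel" using finV by measurable
  finally show ?thesis .
next
  case False
  hence "{u::real. gS S u = S'} = {}" unfolding gS_def by auto
  thus ?thesis by simp
qed

lemma KI_nonneg: "KI I S S' \<ge> 0" by (simp add: KI_def)

lemma sum_KI:
  assumes B: "B \<subseteq> Pow V" and I: "I \<in> sets borel" "emeasure lborel I < \<infinity>"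
  shows "(\<Sum>S'\<in>B. KI I S S') = measure lborel (I \<inter> {u. gS S u \<in> B})"
proof -
  have fB: "finite B" using B finV by (meson finite_Pow_iff finite_subset)
  have eq: "I \<inter> {u. gS S u \<in> B} = (\<Union>S'\<in>B. I \<inter> {u. gS S u = S'})" by auto
  have "measure lborel (\<Union>S'\<in>B. I \<inter> {u. gS S u = S'}) = (\<Sum>S'\<in>B. measure lborel (I \<inter> {u. gS S u = S'}))"
  proof (rule measure_finite_Union[OF fB])
    show "(\<lambda>S'. I \<inter> {u. gS S u = S'}) ` B \<subseteq> sets lborel" using I A_borel by auto
    show "disjoint_family_on (\<lambda>S'. I \<inter> {u. gS S u = S'}) B"
      unfolding disjoint_family_on_def by auto
    fix S' assume "S' \<in> B"
    have "emeasure lborel (I \<inter> {u. gS S u = S'}) \<le> emeasure lborel I"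
      by (rule emeasure_mono) (use I in auto)
    thus "emeasure lborel (I \<inter> {u. gS S u = S'}) \<noteq> \<infinity>" using I(2) by (auto simp: top_unique)
  qed
  thus ?thesis unfolding eq KI_def by simp
qed

lemma gS_Pow: "gS S u \<in> Pow V" unfolding gS_def by auto

lemma KI_total:
  assumes I: "I \<in> sets borel" "emeasure lborel I < \<infinity>"
  shows "(\<Sum>S'\<in>Pow V. KI I S S') = measure lborel I"
  using sum_KI[OF _ I, of "Pow V" S] gS_Pow by simp

lemma KI_mem:
  assumes I: "I \<in> sets borel" "emeasure lborel I < \<infinity>" and y: "y \<in> V"
  shows "(\<Sum>S'\<in>Pow V. KI I S S' * (if y \<in> S' then 1 else 0)) = measure lborel (I \<inter> {..lazy_pS V E y S})"
proof -
  have "(\<Sum>S'\<in>Pow V. KI I S S' * (if y \<in> S' then 1 else 0)) = (\<Sum>S'\<in>{S'\<in>Pow V. y \<in> S'}. KI I S S')"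
    using finV by (simp add: sum.inter_filter[symmetric] if_distrib cong: if_cong)
  also have "\<dots> = measure lborel (I \<inter> {u. gS S u \<in> {S'\<in>Pow V. y \<in> S'}})"
    by (rule sum_KI[OF _ I]) auto
  also have "I \<inter> {u. gS S u \<in> {S'\<in>Pow V. y \<in> S'}} = I \<inter> {..lazy_pS V E y S}"
    using y unfolding gS_def by auto
  finally show ?thesis .
qed

lemma vol_as_sum: "S' \<subseteq> V \<Longrightarrow> vol V E S' = (\<Sum>y\<in>V. real (deg V E y) * (if y \<in> S' then 1 else 0))"
proof -
  assume S': "S' \<subseteq> V"
  have "(\<Sum>y\<in>V. real (deg V E y) * (if y \<in> S' then 1 else 0)) = (\<Sum>y\<in>V. if y \<in> S' then real (deg V E y) else 0)"
    by (intro sum.cong) auto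
  also have "\<dots> = (\<Sum>y\<in>V \<inter> S'. real (deg V E y))" using finV by (rule sum.inter_restrict[symmetric])
  also have "V \<inter> S' = S'" using S' by auto
  finally show ?thesis by (simp add: vol_def)
qed

lemma KI_vol:
  assumes I: "I \<in> sets borel" "emeasure lborel I < \<infinity>"
  shows "(\<Sum>S'\<in>Pow V. KI I S S' * vol V E S') = (\<Sum>y\<in>V. real (deg V E y) * measure lborel (I \<inter> {..lazy_pS V E y S}))"
proof -
  have "(\<Sum>S'\<in>Pow V. KI I S S' * vol V E S') = (\<Sum>S'\<in>Pow V. \<Sum>y\<in>V. real (deg V E y) * (KI I S S' * (if y \<in> S' then 1 else 0)))"
    by (rule sum.cong) (auto simp: vol_as_sum sum_distrib_left mult_ac)
  also have "\<dots> = (\<Sum>y\<in>V. real (deg V E y) * (\<Sum>S'\<in>Pow V. KI I S S' * (if y \<in> S' then 1 else 0)))"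
    by (subst sum.swap) (simp add: sum_distrib_left)
  also have "\<dots> = (\<Sum>y\<in>V. real (deg V E y) * measure lborel (I \<inter> {..lazy_pS V E y S}))"
    using KI_mem[OF I] by simp
  finally show ?thesis .
qed

end


lemma cs_sqrt:
  fixes w x :: "'b \<Rightarrow> real"
  assumes "\<And>i. i \<in> A \<Longrightarrow> w i \<ge> 0" "\<And>i. i \<in> A \<Longrightarrow> x i \<ge> 0"
  shows "(\<Sum>i\<in>A. w i * sqrt (x i)) \<le> sqrt ((\<Sum>i\<in>A. w i) * (\<Sum>i\<in>A. w i * x i))"
proof -
  have "(\<Sum>i\<in>A. sqrt (w i) * (sqrt (w i) * sqrt (x i)))\<^sup>2 \<le> (\<Sum>i\<in>A. (sqrt (w i))\<^sup>2) * (\<Sum>i\<in>A. (sqrt (w i) * sqrt (x i))\<^sup>2)"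
    by (rule Cauchy_Schwarz_ineq_sum)
  also have "(\<Sum>i\<in>A. sqrt (w i) * (sqrt (w i) * sqrt (x i))) = (\<Sum>i\<in>A. w i * sqrt (x i))"
    using assms by (intro sum.cong) (auto simp: mult.assoc[symmetric])
  also have "(\<Sum>i\<in>A. (sqrt (w i))\<^sup>2) = (\<Sum>i\<in>A. w i)" using assms by (intro sum.cong) auto
  also have "(\<Sum>i\<in>A. (sqrt (w i) * sqrt (x i))\<^sup>2) = (\<Sum>i\<in>A. w i * x i)"
    using assms by (intro sum.cong) (auto simp: power_mult_distrib)
  finally have h: "(\<Sum>i\<in>A. w i * sqrt (x i))\<^sup>2 \<le> (\<Sum>i\<in>A. w i) * (\<Sum>i\<in>A. w i * x i)" .
  have "(\<Sum>i\<in>A. w i * sqrt (x i)) \<le> sqrt ((\<Sum>i\<in>A. w i * sqrt (x i))\<^sup>2)" by simp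
  also have "\<dots> \<le> sqrt ((\<Sum>i\<in>A. w i) * (\<Sum>i\<in>A. w i * x i))" using h by (rule real_sqrt_le_mono)
  finally show ?thesis .
qed

context sgraph begin

lemma KI_lin:
  assumes I: "I \<in> sets borel" "emeasure lborel I < \<infinity>"
  shows "(\<Sum>S'\<in>Pow V. KI I S S' * (\<Sum>y\<in>V. c y * (if y \<in> S' then 1 else 0))) = (\<Sum>y\<in>V. c y * measure lborel (I \<inter> {..lazy_pS V E y S}))"
proof -
  have "(\<Sum>S'\<in>Pow V. KI I S S' * (\<Sum>y\<in>V. c y * (if y \<in> S' then 1 else 0))) = (\<Sum>S'\<in>Pow V. \<Sum>y\<in>V. c y * (KI I S S' * (if y \<in> S' then 1 else 0)))"
    by (rule sum.cong) (auto simp: sum_distrib_left mult_ac)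
  also have "\<dots> = (\<Sum>y\<in>V. c y * (\<Sum>S'\<in>Pow V. KI I S S' * (if y \<in> S' then 1 else 0)))"
    by (subst sum.swap) (simp add: sum_distrib_left)
  also have "\<dots> = (\<Sum>y\<in>V. c y * measure lborel (I \<inter> {..lazy_pS V E y S}))"
    using KI_mem[OF I] by simp
  finally show ?thesis .
qed

lemma I01: "{0..1::real} \<in> sets borel" "emeasure lborel {0..1::real} < \<infinity>" by auto
lemma IL: "{0..1/2::real} \<in> sets borel" "emeasure lborel {0..1/2::real} < \<infinity>"
proof -
  have "emeasure lborel {0..1/2::real} \<le> emeasure lborel {0..1::real}" by (rule emeasure_mono) auto
  thus "emeasure lborel {0..1/2::real} < \<infinity>" by (simp add: le_less_trans)
qed auto
lemma IH: "{1/2<..1::real} \<in> sets borel" "emeasure lborel {1/2<..1::real} < \<infinity>"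
proof -
  have "emeasure lborel {1/2<..1::real} \<le> emeasure lborel {0..1::real}" by (rule emeasure_mono) auto
  thus "emeasure lborel {1/2<..1::real} < \<infinity>" by (simp add: le_less_trans)
qed auto

lemma K_split: "KI {0..1} S S' = KI {0..1/2} S S' + KI {1/2<..1} S S'"
proof -
  have "{0..1} \<inter> {u. gS S u = S'} = ({0..1/2} \<inter> {u. gS S u = S'}) \<union> ({1/2<..1} \<inter> {u. gS S u = S'})"
    by auto
  moreover have "measure lborel (({0..1/2} \<inter> {u. gS S u = S'}) \<union> ({1/2<..1} \<inter> {u. gS S u = S'}))
     = measure lborel ({0..1/2} \<inter> {u. gS S u = S'}) + measure lborel ({1/2<..1} \<inter> {u. gS S u = S'})"
  proof (rule measure_Union)
    have "emeasure lborel ({0..1/2} \<inter> {u. gS S u = S'}) \<le> emeasure lborel {0..1/2::real}"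
      by (rule emeasure_mono) (use A_borel in auto)
    thus "emeasure lborel ({0..1/2} \<inter> {u. gS S u = S'}) \<noteq> \<infinity>" by (auto simp: top_unique)
    have "emeasure lborel ({1/2<..1} \<inter> {u. gS S u = S'}) \<le> emeasure lborel {1/2<..1::real}"
      by (rule emeasure_mono) (use A_borel in auto)
    thus "emeasure lborel ({1/2<..1} \<inter> {u. gS S u = S'}) \<noteq> \<infinity>" by (auto simp: top_unique)
  qed (use A_borel in auto)
  ultimately show ?thesis unfolding KI_def by simp
qed

lemma meas_F: "0 \<le> q \<Longrightarrow> q \<le> 1 \<Longrightarrow> measure lborel ({0..1} \<inter> {..q}) = q"
proof -
  assume "0 \<le> q" "q \<le> 1"
  hence "{0..1} \<inter> {..q} = {0..q}" by auto
  thus ?thesis using \<open>0 \<le> q\<close> by simp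
qed

lemma meas_L: "0 \<le> q \<Longrightarrow> measure lborel ({0..1/2} \<inter> {..q}) = min q (1/2)"
proof -
  assume "0 \<le> q"
  hence "{0..1/2} \<inter> {..q} = {0..min q (1/2)}" by auto
  thus ?thesis using \<open>0 \<le> q\<close> by simp
qed

abbreviation "dg y \<equiv> real (deg V E y)"

lemma dq: "S \<subseteq> V \<Longrightarrow> y \<in> V \<Longrightarrow> dg y * lazy_pS V E y S = real (nb S y) / 2 + (if y \<in> S then dg y / 2 else 0)"
  using lazy_pS_formula[of S y] degpos by (auto simp: field_simps)

lemma sum_split: "S \<subseteq> V \<Longrightarrow> (\<Sum>y\<in>V. f y) = (\<Sum>y\<in>S. f y) + (\<Sum>y\<in>V-S. f y)"
  using finV by (metis sum.subset_diff add.commute)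

lemma sum_nb_S: "S \<subseteq> V \<Longrightarrow> (\<Sum>y\<in>S. real (nb S y)) = vol V E S - bdry V E S"
proof -
  assume S: "S \<subseteq> V"
  have "(\<Sum>y\<in>S. real (nb S y)) = (\<Sum>y\<in>S. dg y - real (nb (V-S) y))"
    using deg_split[OF S] by (intro sum.cong) auto
  thus ?thesis using bdry_eq1[OF S] by (simp add: vol_def sum_subtractf)
qed

lemma K_total: "(\<Sum>S'\<in>Pow V. esp_K V E S S') = 1"
  using KI_total[OF I01] by (simp add: esp_K_KI)

lemma KL_total: "(\<Sum>S'\<in>Pow V. KI {0..1/2} S S') = 1/2"
  using KI_total[OF IL] by simp

lemma KH_total: "(\<Sum>S'\<in>Pow V. KI {1/2<..1} S S') = 1/2"
  using KI_total[OF IH] by simp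

lemma K_vol:
  assumes S: "S \<subseteq> V"
  shows "(\<Sum>S'\<in>Pow V. esp_K V E S S' * vol V E S') = vol V E S"
proof -
  have "(\<Sum>S'\<in>Pow V. esp_K V E S S' * vol V E S') = (\<Sum>S'\<in>Pow V. KI {0..1} S S' * (\<Sum>y\<in>V. dg y * (if y \<in> S' then 1 else 0)))"
    by (intro sum.cong) (auto simp: esp_K_KI vol_as_sum)
  also have "\<dots> = (\<Sum>y\<in>V. dg y * measure lborel ({0..1} \<inter> {..lazy_pS V E y S}))"
    by (rule KI_lin[OF I01])
  also have "\<dots> = (\<Sum>y\<in>V. dg y * lazy_pS V E y S)"
    using meas_F lazy_pS_bounds[OF S] by (intro sum.cong) auto
  also have "\<dots> = (\<Sum>y\<in>V. real (nb S y) / 2 + (if y \<in> S then dg y / 2 else 0))"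
    using dq[OF S] by (intro sum.cong) auto
  also have "\<dots> = (\<Sum>y\<in>S. real (nb S y) / 2 + (if y \<in> S then dg y / 2 else 0)) + (\<Sum>y\<in>V-S. real (nb S y) / 2 + (if y \<in> S then dg y / 2 else 0))"
    by (rule sum_split[OF S])
  also have "\<dots> = (\<Sum>y\<in>S. real (nb S y) / 2 + dg y / 2) + (\<Sum>y\<in>V-S. real (nb S y) / 2)"
    by (intro arg_cong2[where f="(+)"] sum.cong) auto
  also have "\<dots> = vol V E S"
    using sum_nb_S[OF S] bdry_eq2[OF S]
    by (simp add: sum.distrib vol_def sum_divide_distrib[symmetric]) (simp add: field_simps)
  finally show ?thesis .
qed

end


lemma phi_ineq:
  fixes f :: real
  assumes "0 \<le> f" "f \<le> 1"
  shows "sqrt ((1+f)/4) + sqrt ((1-f)/4) \<le> 1 - f\<^sup>2/8"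
proof -
  define a where "a = sqrt ((1+f)/4)"
  define b where "b = sqrt ((1-f)/4)"
  have a2: "a\<^sup>2 = (1+f)/4" using assms by (simp add: a_def)
  have b2: "b\<^sup>2 = (1-f)/4" using assms by (simp add: b_def)
  have ab: "a * b = sqrt (1 - f\<^sup>2) / 4"
    unfolding a_def b_def by (simp add: real_sqrt_mult[symmetric] real_sqrt_divide algebra_simps power2_eq_square)
  have "sqrt (1 - f\<^sup>2) \<le> sqrt ((1 - f\<^sup>2/2)\<^sup>2)"
    by (rule real_sqrt_le_mono) (use assms in \<open>simp add: power2_eq_square algebra_simps\<close>)
  also have "\<dots> = 1 - f\<^sup>2/2"
  proof -
    have "f\<^sup>2 \<le> 1" using assms by (simp add: power_le_one)
    thus ?thesis by simp
  qed
  finally have s: "sqrt (1 - f\<^sup>2) \<le> 1 - f\<^sup>2/2" .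
  have "(a + b)\<^sup>2 = a\<^sup>2 + b\<^sup>2 + 2 * (a * b)" by (simp add: power2_eq_square algebra_simps)
  also have "\<dots> \<le> 1 - f\<^sup>2/4" using a2 b2 ab s by simp
  also have "\<dots> \<le> (1 - f\<^sup>2/8)\<^sup>2" by (simp add: power2_eq_square algebra_simps) (use assms(1) in \<open>simp add: mult_nonneg_nonneg\<close>)
  finally have "(a+b)\<^sup>2 \<le> (1 - f\<^sup>2/8)\<^sup>2" .
  moreover have "0 \<le> 1 - f\<^sup>2/8"
  proof -
    have "f\<^sup>2 \<le> 1" using assms by (simp add: power_le_one)
    thus ?thesis by simp
  qed
  ultimately have "a + b \<le> 1 - f\<^sup>2/8" by (rule power2_le_imp_le)
  thus ?thesis by (simp add: a_def b_def)
qed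

context sgraph begin

lemma KL_vol:
  assumes S: "S \<subseteq> V"
  shows "(\<Sum>S'\<in>Pow V. KI {0..1/2} S S' * vol V E S') = (vol V E S + bdry V E S) / 2"
proof -
  have "(\<Sum>S'\<in>Pow V. KI {0..1/2} S S' * vol V E S') = (\<Sum>S'\<in>Pow V. KI {0..1/2} S S' * (\<Sum>y\<in>V. dg y * (if y \<in> S' then 1 else 0)))"
    by (intro sum.cong) (auto simp: vol_as_sum)
  also have "\<dots> = (\<Sum>y\<in>V. dg y * measure lborel ({0..1/2} \<inter> {..lazy_pS V E y S}))"
    by (rule KI_lin[OF IL])
  also have "\<dots> = (\<Sum>y\<in>V. dg y * min (lazy_pS V E y S) (1/2))"
    using meas_L lazy_pS_bounds[OF S] by (intro sum.cong) auto
  also have "\<dots> = (\<Sum>y\<in>S. dg y * min (lazy_pS V E y S) (1/2)) + (\<Sum>y\<in>V-S. dg y * min (lazy_pS V E y S) (1/2))"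
    by (rule sum_split[OF S])
  also have "\<dots> = (\<Sum>y\<in>S. dg y / 2) + (\<Sum>y\<in>V-S. real (nb S y) / 2)"
  proof (intro arg_cong2[where f="(+)"] sum.cong refl)
    fix y assume y: "y \<in> S"
    hence "min (lazy_pS V E y S) (1/2) = 1/2" using lazy_pS_bounds[OF S, of y] S by auto
    thus "dg y * min (lazy_pS V E y S) (1/2) = dg y / 2" by simp
  next
    fix y assume y: "y \<in> V - S"
    hence "min (lazy_pS V E y S) (1/2) = lazy_pS V E y S" using lazy_pS_bounds[OF S, of y] S by auto
    thus "dg y * min (lazy_pS V E y S) (1/2) = real (nb S y) / 2" using dq[OF S, of y] y by simp
  qed
  also have "\<dots> = (vol V E S + bdry V E S) / 2"
    using bdry_eq2[OF S] by (simp add: vol_def sum_divide_distrib[symmetric] add_divide_distrib)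
  finally show ?thesis .
qed

lemma KH_vol:
  assumes S: "S \<subseteq> V"
  shows "(\<Sum>S'\<in>Pow V. KI {1/2<..1} S S' * vol V E S') = (vol V E S - bdry V E S) / 2"
proof -
  have "(\<Sum>S'\<in>Pow V. esp_K V E S S' * vol V E S') = (\<Sum>S'\<in>Pow V. KI {0..1/2} S S' * vol V E S') + (\<Sum>S'\<in>Pow V. KI {1/2<..1} S S' * vol V E S')"
    by (simp add: esp_K_KI K_split distrib_right sum.distrib)
  thus ?thesis using K_vol[OF S] KL_vol[OF S] by (simp add: field_simps)
qed

lemma vol_symdiff:
  assumes S: "S \<subseteq> V" and S': "S' \<subseteq> V"
  shows "vol V E (symdiff S' S) = vol V E S + (\<Sum>y\<in>V. (if y \<in> S then - dg y else dg y) * (if y \<in> S' then 1 else 0))"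
proof -
  have sd: "symdiff S' S \<subseteq> V" using S S' by (auto simp: symdiff_def)
  show ?thesis unfolding vol_as_sum[OF sd] vol_as_sum[OF S] sum.distrib[symmetric]
    by (intro sum.cong) (auto simp: symdiff_def)
qed

lemma K_symdiff:
  assumes S: "S \<subseteq> V"
  shows "(\<Sum>S'\<in>Pow V. esp_K V E S S' * vol V E (symdiff S' S)) = bdry V E S"
proof -
  define c where "c y = (if y \<in> S then - dg y else dg y)" for y
  have "(\<Sum>S'\<in>Pow V. esp_K V E S S' * vol V E (symdiff S' S)) =
     (\<Sum>S'\<in>Pow V. esp_K V E S S' * vol V E S + KI {0..1} S S' * (\<Sum>y\<in>V. c y * (if y \<in> S' then 1 else 0)))"
    by (intro sum.cong) (auto simp: vol_symdiff[OF S] c_def esp_K_KI distrib_left)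
  also have "\<dots> = vol V E S + (\<Sum>y\<in>V. c y * measure lborel ({0..1} \<inter> {..lazy_pS V E y S}))"
    by (simp add: sum.distrib KI_lin[OF I01] sum_distrib_right[symmetric] K_total)
  also have "(\<Sum>y\<in>V. c y * measure lborel ({0..1} \<inter> {..lazy_pS V E y S})) = (\<Sum>y\<in>V. c y * lazy_pS V E y S)"
    using meas_F lazy_pS_bounds[OF S] by (intro sum.cong) auto
  also have "\<dots> = (\<Sum>y\<in>S. c y * lazy_pS V E y S) + (\<Sum>y\<in>V-S. c y * lazy_pS V E y S)"
    by (rule sum_split[OF S])
  also have "\<dots> = (\<Sum>y\<in>S. - (real (nb S y) / 2 + dg y / 2)) + (\<Sum>y\<in>V-S. real (nb S y) / 2)"
  proof (intro arg_cong2[where f="(+)"] sum.cong refl)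
    fix y assume y: "y \<in> S"
    thus "c y * lazy_pS V E y S = - (real (nb S y) / 2 + dg y / 2)"
      using dq[OF S, of y] S by (auto simp: c_def)
  next
    fix y assume y: "y \<in> V - S"
    thus "c y * lazy_pS V E y S = real (nb S y) / 2"
      using dq[OF S, of y] S by (auto simp: c_def)
  qed
  also have "(\<Sum>y\<in>S. - (real (nb S y) / 2 + dg y / 2)) = - ((\<Sum>y\<in>S. real (nb S y)) / 2 + vol V E S / 2)"
    by (simp add: sum_negf sum_subtractf sum.distrib sum_divide_distrib vol_def)
  also have "(\<Sum>y\<in>V-S. real (nb S y) / 2) = bdry V E S / 2"
    using bdry_eq2[OF S] by (simp add: sum_divide_distrib)
  finally show ?thesis using sum_nb_S[OF S] by (simp add: field_simps)
qed

end


lemma rlnr: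
  fixes r :: real assumes r: "r > 0"
  shows "2 * r - 2 * sqrt r \<le> r * ln r"
proof -
  have sp: "sqrt r > 0" using r by simp
  have "ln (1 / sqrt r) \<le> 1 / sqrt r - 1" using sp by (intro ln_le_minus_one) simp
  moreover have "ln (1 / sqrt r) = - ln r / 2" using r by (simp add: ln_div ln_sqrt)
  ultimately have "2 - 2 / sqrt r \<le> ln r" by simp
  hence "r * (2 - 2 / sqrt r) \<le> r * ln r" using r by (intro mult_left_mono) auto
  moreover have "r * (2 - 2 / sqrt r) = 2 * r - 2 * sqrt r"
    using sp r by (simp add: field_simps)
  ultimately show ?thesis by simp
qed

context sgraph begin

abbreviation "Kh \<equiv> esp_Khat V E"

lemma Kh_nonneg: "Kh S S' \<ge> 0"
  unfolding esp_Khat_def esp_K_def by (intro mult_nonneg_nonneg divide_nonneg_nonneg vol_nonneg) auto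

lemma Kh_empty: "Kh {} S' = 0"
  unfolding esp_Khat_def by simp

lemma Kh_to_empty: "Kh S {} = 0"
  unfolding esp_Khat_def by simp

lemma Kh_total: "S \<subseteq> V \<Longrightarrow> S \<noteq> {} \<Longrightarrow> (\<Sum>S'\<in>Pow V. Kh S S') = 1"
proof -
  assume S: "S \<subseteq> V" "S \<noteq> {}"
  have m: "vol V E S > 0" using vol_ge1[OF S] by simp
  have "(\<Sum>S'\<in>Pow V. Kh S S') = (\<Sum>S'\<in>Pow V. esp_K V E S S' * vol V E S') / vol V E S"
    unfolding esp_Khat_def by (simp add: sum_divide_distrib mult_ac)
  thus ?thesis using K_vol[OF S(1)] m by simp
qed

lemma K_nonneg: "esp_K V E S S' \<ge> 0" by (simp add: esp_K_def)

lemma K_sqrt: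
  assumes S: "S \<subseteq> V" "S \<noteq> {}"
  shows "(\<Sum>S'\<in>Pow V. esp_K V E S S' * sqrt (vol V E S' / vol V E S)) \<le> 1 - (bdry V E S / vol V E S)\<^sup>2 / 8"
proof -
  define m where "m = vol V E S"
  define b where "b = bdry V E S"
  have m: "m > 0" using vol_ge1[OF S] by (simp add: m_def)
  have b: "0 \<le> b" "b \<le> m" using bdry_nonneg bdry_le_vol[OF S(1)] by (auto simp: m_def b_def)
  have e1: "(\<Sum>S'\<in>Pow V. esp_K V E S S' * sqrt (vol V E S' / m)) =
     (\<Sum>S'\<in>Pow V. KI {0..1/2} S S' * sqrt (vol V E S' / m)) + (\<Sum>S'\<in>Pow V. KI {1/2<..1} S S' * sqrt (vol V E S' / m))"
    by (simp add: esp_K_KI K_split distrib_right sum.distrib)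
  have "(\<Sum>S'\<in>Pow V. KI {0..1/2} S S' * sqrt (vol V E S' / m)) \<le>
      sqrt ((\<Sum>S'\<in>Pow V. KI {0..1/2} S S') * (\<Sum>S'\<in>Pow V. KI {0..1/2} S S' * (vol V E S' / m)))"
    by (rule cs_sqrt) (auto simp: KI_nonneg vol_nonneg m less_imp_le intro!: divide_nonneg_nonneg)
  also have "(\<Sum>S'\<in>Pow V. KI {0..1/2} S S' * (vol V E S' / m)) = (m + b) / 2 / m"
  proof -
    have "(\<Sum>S'\<in>Pow V. KI {0..1/2} S S' * (vol V E S' / m)) = (\<Sum>S'\<in>Pow V. KI {0..1/2} S S' * vol V E S') / m"
      by (simp add: sum_divide_distrib)
    thus ?thesis using KL_vol[OF S(1)] by (simp add: m_def b_def)
  qed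
  finally have e2: "(\<Sum>S'\<in>Pow V. KI {0..1/2} S S' * sqrt (vol V E S' / m)) \<le> sqrt (1/2 * ((m + b) / 2 / m))"
    by (simp add: KL_total)
  have "(\<Sum>S'\<in>Pow V. KI {1/2<..1} S S' * sqrt (vol V E S' / m)) \<le>
      sqrt ((\<Sum>S'\<in>Pow V. KI {1/2<..1} S S') * (\<Sum>S'\<in>Pow V. KI {1/2<..1} S S' * (vol V E S' / m)))"
    by (rule cs_sqrt) (auto simp: KI_nonneg vol_nonneg m less_imp_le intro!: divide_nonneg_nonneg)
  also have "(\<Sum>S'\<in>Pow V. KI {1/2<..1} S S' * (vol V E S' / m)) = (m - b) / 2 / m"
  proof -
    have "(\<Sum>S'\<in>Pow V. KI {1/2<..1} S S' * (vol V E S' / m)) = (\<Sum>S'\<in>Pow V. KI {1/2<..1} S S' * vol V E S') / m"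
      by (simp add: sum_divide_distrib)
    thus ?thesis using KH_vol[OF S(1)] by (simp add: m_def b_def)
  qed
  finally have e3: "(\<Sum>S'\<in>Pow V. KI {1/2<..1} S S' * sqrt (vol V E S' / m)) \<le> sqrt (1/2 * ((m - b) / 2 / m))"
    by (simp add: KH_total)
  have "sqrt (1/2 * ((m + b) / 2 / m)) + sqrt (1/2 * ((m - b) / 2 / m)) = sqrt ((1 + b/m)/4) + sqrt ((1 - b/m)/4)"
    using m by (simp add: field_simps)
  also have "\<dots> \<le> 1 - (b/m)\<^sup>2/8"
    by (rule phi_ineq) (use m b in auto)
  finally have e4: "sqrt (1/2 * ((m + b) / 2 / m)) + sqrt (1/2 * ((m - b) / 2 / m)) \<le> 1 - (b/m)\<^sup>2/8" .
  have "(\<Sum>S'\<in>Pow V. esp_K V E S S' * sqrt (vol V E S' / m)) \<le> 1 - (b/m)\<^sup>2/8"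
    using e1 e2 e3 e4 by linarith
  thus ?thesis by (simp add: m_def b_def)
qed

lemma step_A:
  assumes S: "S \<subseteq> V" and C: "C \<ge> 0"
  shows "(\<Sum>S'\<in>Pow V. Kh S S' * (C * (1 / vol V E S' - 1 / vol V E S) + (vol V E (symdiff S' S) + bdry V E S) / vol V E S'))
         \<le> 2 * (bdry V E S / vol V E S)"
proof (cases "S = {}")
  case True
  thus ?thesis by (simp add: Kh_empty bdry_def)
next
  case False
  define m where "m = vol V E S"
  have m: "m > 0" using vol_ge1[OF S False] by (simp add: m_def)
  define X where "X S' = vol V E (symdiff S' S) + bdry V E S" for S'
  have X: "X S' \<ge> 0" for S' by (simp add: X_def vol_nonneg bdry_nonneg)
  have "(\<Sum>S'\<in>Pow V. Kh S S' * (C * (1 / vol V E S' - 1 / m) + X S' / vol V E S'))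
     \<le> (\<Sum>S'\<in>Pow V. esp_K V E S S' * (C / m) - Kh S S' * (C / m) + esp_K V E S S' * X S' / m)"
  proof (rule sum_mono)
    fix S' assume "S' \<in> Pow V"
    show "Kh S S' * (C * (1 / vol V E S' - 1 / m) + X S' / vol V E S') \<le> esp_K V E S S' * (C / m) - Kh S S' * (C / m) + esp_K V E S S' * X S' / m"
    proof (cases "vol V E S' = 0")
      case True
      thus ?thesis using K_nonneg[of S S'] X[of S'] C m
        by (simp add: esp_Khat_def m_def[symmetric])
    next
      case False
      hence v: "vol V E S' > 0" using vol_nonneg[of S'] by simp
      show ?thesis unfolding esp_Khat_def m_def[symmetric] using v m
        by (simp add: field_simps)
    qed
  qed
  also have "\<dots> = (C / m) * (\<Sum>S'\<in>Pow V. esp_K V E S S') - (C / m) * (\<Sum>S'\<in>Pow V. Kh S S') + (\<Sum>S'\<in>Pow V. esp_K V E S S' * X S') / m"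
    by (simp add: sum.distrib sum_subtractf sum_distrib_left sum_divide_distrib mult_ac)
  also have "(\<Sum>S'\<in>Pow V. esp_K V E S S' * X S') = 2 * bdry V E S"
    unfolding X_def using K_symdiff[OF S] K_total
    by (simp add: distrib_left sum.distrib sum_distrib_right[symmetric])
  finally show ?thesis using Kh_total[OF S False] K_total by (simp add: m_def X_def)
qed

lemma step_B:
  assumes S: "S \<subseteq> V"
  shows "(\<Sum>S'\<in>Pow V. Kh S S' * (ln (vol V E S') - ln (vol V E S))) \<ge> (bdry V E S / vol V E S)\<^sup>2 / 4"
proof (cases "S = {}")
  case True
  thus ?thesis by (simp add: Kh_empty bdry_def)
next
  case False
  define m where "m = vol V E S"
  have m: "m > 0" using vol_ge1[OF S False] by (simp add: m_def)
  have "(\<Sum>S'\<in>Pow V. esp_K V E S S' * (2 * (vol V E S' / m) - 2 * sqrt (vol V E S' / m)))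
      \<le> (\<Sum>S'\<in>Pow V. Kh S S' * (ln (vol V E S') - ln m))"
  proof (rule sum_mono)
    fix S' assume "S' \<in> Pow V"
    show "esp_K V E S S' * (2 * (vol V E S' / m) - 2 * sqrt (vol V E S' / m)) \<le> Kh S S' * (ln (vol V E S') - ln m)"
    proof (cases "vol V E S' = 0")
      case True
      thus ?thesis by (simp add: esp_Khat_def)
    next
      case False
      hence v: "vol V E S' > 0" using vol_nonneg[of S'] by simp
      have r: "vol V E S' / m > 0" using v m by simp
      have "ln (vol V E S') - ln m = ln (vol V E S' / m)" using v m by (simp add: ln_div)
      hence eq: "Kh S S' * (ln (vol V E S') - ln m) = esp_K V E S S' * ((vol V E S' / m) * ln (vol V E S' / m))"
        unfolding esp_Khat_def m_def[symmetric] by simp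
      have "esp_K V E S S' * (2 * (vol V E S' / m) - 2 * sqrt (vol V E S' / m)) \<le> esp_K V E S S' * ((vol V E S' / m) * ln (vol V E S' / m))"
        by (rule mult_left_mono[OF rlnr[OF r] K_nonneg])
      thus ?thesis using eq by linarith
    qed
  qed
  moreover have "(\<Sum>S'\<in>Pow V. esp_K V E S S' * (2 * (vol V E S' / m) - 2 * sqrt (vol V E S' / m)))
      = 2 * ((\<Sum>S'\<in>Pow V. esp_K V E S S' * vol V E S') / m) - 2 * (\<Sum>S'\<in>Pow V. esp_K V E S S' * sqrt (vol V E S' / m))"
    by (simp add: sum_subtractf sum_distrib_left sum_divide_distrib right_diff_distrib mult_ac)
  moreover have "(\<Sum>S'\<in>Pow V. esp_K V E S S' * vol V E S') / m = 1" using K_vol[OF S] m by (simp add: m_def)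
  ultimately show ?thesis using K_sqrt[OF S False] by (simp add: m_def)
qed

end


definition pcons :: "'b \<Rightarrow> (nat \<Rightarrow> 'b) \<Rightarrow> nat \<Rightarrow> 'b" where
  "pcons S0 s = (\<lambda>i. if i = 0 then S0 else s (i - 1))"

lemma pcons_0[simp]: "pcons S0 s 0 = S0" by (simp add: pcons_def)
lemma pcons_Suc[simp]: "pcons S0 s (Suc i) = s i" by (simp add: pcons_def)

lemma paths_mem: "s \<in> paths V T S0 \<Longrightarrow> i \<le> T \<Longrightarrow> s i \<in> (if i = 0 then {S0} else Pow V)"
  unfolding paths_def by (rule PiE_mem) auto

lemma paths_arb: "s \<in> paths V T S0 \<Longrightarrow> i > T \<Longrightarrow> s i = undefined"
  unfolding paths_def by (rule PiE_arb) auto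

lemma paths_I: "(\<And>i. i \<le> T \<Longrightarrow> s i \<in> (if i = 0 then {S0} else Pow V)) \<Longrightarrow> (\<And>i. i > T \<Longrightarrow> s i = undefined) \<Longrightarrow> s \<in> paths V T S0"
  unfolding paths_def by (rule PiE_I) auto

lemma paths_0: "s \<in> paths V T S0 \<Longrightarrow> s 0 = S0"
  using paths_mem[of s V T S0 0] by simp

lemma paths_sub: "s \<in> paths V T S0 \<Longrightarrow> S0 \<subseteq> V \<Longrightarrow> i \<le> T \<Longrightarrow> s i \<subseteq> V"
  using paths_mem[of s V T S0 i] by (cases "i = 0") auto

lemma finite_paths: "finite V \<Longrightarrow> finite (paths V T S0)"
  unfolding paths_def by (intro finite_PiE) auto

lemma paths_ne: "paths V T S0 \<noteq> {}"
  unfolding paths_def by (auto simp: PiE_eq_empty_iff)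

lemma pcons_in: "S1 \<in> Pow V \<Longrightarrow> s \<in> paths V T S1 \<Longrightarrow> pcons S0 s \<in> paths V (Suc T) S0"
proof (rule paths_I)
  fix i assume S1: "S1 \<in> Pow V" and s: "s \<in> paths V T S1" and i: "i \<le> Suc T"
  show "pcons S0 s i \<in> (if i = 0 then {S0} else Pow V)"
  proof (cases i)
    case (Suc k)
    hence "k \<le> T" using i by simp
    hence "s k \<in> (if k = 0 then {S1} else Pow V)" by (rule paths_mem[OF s])
    thus ?thesis using S1 Suc by (cases "k = 0") auto
  qed simp
next
  fix i assume s: "s \<in> paths V T S1" and i: "i > Suc T"
  then obtain k where k: "i = Suc k" "k > T" by (cases i) auto
  thus "pcons S0 s i = undefined" using paths_arb[OF s] by simp
qed

lemma paths_Suc: "paths V (Suc T) S0 = (\<lambda>(S1, s). pcons S0 s) ` (SIGMA S1:Pow V. paths V T S1)"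
proof
  show "(\<lambda>(S1, s). pcons S0 s) ` (SIGMA S1:Pow V. paths V T S1) \<subseteq> paths V (Suc T) S0"
    using pcons_in by auto
next
  show "paths V (Suc T) S0 \<subseteq> (\<lambda>(S1, s). pcons S0 s) ` (SIGMA S1:Pow V. paths V T S1)"
  proof
    fix c assume c: "c \<in> paths V (Suc T) S0"
    define s where "s = (\<lambda>i. if i \<le> T then c (Suc i) else undefined)"
    have cc: "c i \<in> (if i = 0 then {S0} else Pow V)" if "i \<le> Suc T" for i
      by (rule paths_mem[OF c that])
    have ce: "c i = undefined" if "i > Suc T" for i
      by (rule paths_arb[OF c that])
    have "s \<in> paths V T (c 1)"
    proof (rule paths_I)
      fix i assume i: "i \<le> T"
      have "c (Suc i) \<in> Pow V" using cc[of "Suc i"] i by simp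
      thus "s i \<in> (if i = 0 then {c 1} else Pow V)" using i by (simp add: s_def)
    qed (simp add: s_def)
    moreover have "c 1 \<in> Pow V" using cc[of 1] by auto
    moreover have "pcons S0 s = c"
    proof
      fix i show "pcons S0 s i = c i"
      proof (cases i)
        case 0 thus ?thesis using cc[of 0] by simp
      next
        case (Suc k) thus ?thesis using ce[of i] by (auto simp: s_def)
      qed
    qed
    ultimately show "c \<in> (\<lambda>(S1, s). pcons S0 s) ` (SIGMA S1:Pow V. paths V T S1)"
      by (auto intro!: image_eqI[where x="(c 1, s)"])
  qed
qed

lemma pcons_inj: "inj_on (\<lambda>(S1, s). pcons S0 s) (SIGMA S1:Pow V. paths V T S1)"
proof (rule inj_onI, clarify)
  fix S1 s S1' s'
  assume s: "s \<in> paths V T S1" and s': "s' \<in> paths V T S1'" and eq: "pcons S0 s = pcons S0 s'"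
  have "s = s'"
  proof
    fix i show "s i = s' i" using fun_cong[OF eq, of "Suc i"] by simp
  qed
  moreover have "S1 = S1'" using paths_0[OF s] paths_0[OF s'] \<open>s = s'\<close> by simp
  ultimately show "S1 = S1' \<and> s = s'" by simp
qed

lemma prob_pcons: "path_prob V E (Suc T) (pcons S0 s) = esp_Khat V E S0 (s 0) * path_prob V E T s"
proof -
  have "path_prob V E (Suc T) (pcons S0 s) = (\<Prod>i\<in>{1..Suc T}. esp_Khat V E (pcons S0 s (i - 1)) (pcons S0 s i))"
    by (simp add: path_prob_def)
  also have "\<dots> = esp_Khat V E (pcons S0 s 0) (pcons S0 s 1) * (\<Prod>i\<in>{Suc 1..Suc T}. esp_Khat V E (pcons S0 s (i - 1)) (pcons S0 s i))"
    by (subst prod.atLeast_Suc_atMost) auto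
  also have "(\<Prod>i\<in>{Suc 1..Suc T}. esp_Khat V E (pcons S0 s (i - 1)) (pcons S0 s i)) = (\<Prod>i\<in>{1..T}. esp_Khat V E (pcons S0 s i) (pcons S0 s (Suc i)))"
    by (subst prod.shift_bounds_cl_Suc_ivl) simp
  also have "\<dots> = path_prob V E T s"
    unfolding path_prob_def by (intro prod.cong) (auto simp: pcons_def)
  finally show ?thesis by simp
qed

context sgraph begin

abbreviation "Ev \<equiv> vb_expect V E"

lemma expect_Suc:
  "Ev (Suc T) S0 f = (\<Sum>S1\<in>Pow V. Kh S0 S1 * Ev T S1 (\<lambda>s. f (pcons S0 s)))"
proof -
  have "Ev (Suc T) S0 f = (\<Sum>(S1, s)\<in>(SIGMA S1:Pow V. paths V T S1). path_prob V E (Suc T) (pcons S0 s) * f (pcons S0 s))"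
    unfolding vb_expect_def paths_Suc
    by (rule sum.reindex_cong[OF pcons_inj refl]) auto
  also have "\<dots> = (\<Sum>S1\<in>Pow V. \<Sum>s\<in>paths V T S1. path_prob V E (Suc T) (pcons S0 s) * f (pcons S0 s))"
    by (rule sum.Sigma[symmetric]) (use finV finite_paths[OF finV] in auto)
  also have "\<dots> = (\<Sum>S1\<in>Pow V. Kh S0 S1 * Ev T S1 (\<lambda>s. f (pcons S0 s)))"
    unfolding vb_expect_def sum_distrib_left
    by (intro sum.cong refl) (auto simp: prob_pcons paths_0 mult_ac)
  finally show ?thesis .
qed

lemma Ev_cong: "(\<And>s. s \<in> paths V T S0 \<Longrightarrow> f s = g s) \<Longrightarrow> Ev T S0 f = Ev T S0 g"
  unfolding vb_expect_def by (intro sum.cong) auto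

lemma Ev_add: "Ev T S0 (\<lambda>s. f s + g s) = Ev T S0 f + Ev T S0 g"
  unfolding vb_expect_def by (simp add: distrib_left sum.distrib)

lemma Ev_cmult: "Ev T S0 (\<lambda>s. c * f s) = c * Ev T S0 f"
  unfolding vb_expect_def by (simp add: sum_distrib_left mult_ac)

lemma Ev_const: "Ev T S0 (\<lambda>s. c) = c * Ev T S0 (\<lambda>s. 1)"
  using Ev_cmult[of T S0 c "\<lambda>_. 1"] by simp

lemma prob_nonneg: "path_prob V E T s \<ge> 0"
  unfolding path_prob_def by (intro prod_nonneg) (auto intro: Kh_nonneg)

lemma Ev_mono: "(\<And>s. s \<in> paths V T S0 \<Longrightarrow> f s \<le> g s) \<Longrightarrow> Ev T S0 f \<le> Ev T S0 g"
  unfolding vb_expect_def by (intro sum_mono mult_left_mono) (auto intro: prob_nonneg)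

lemma W1: "S \<subseteq> V \<Longrightarrow> S \<noteq> {} \<Longrightarrow> Ev T S (\<lambda>s. 1) = 1"
proof (induction T arbitrary: S)
  case 0
  have "paths V 0 S = PiE {..0} (\<lambda>i. {S})" unfolding paths_def by (intro PiE_cong) auto
  hence "card (paths V 0 S) = 1" by (simp add: card_PiE)
  thus ?case by (simp add: vb_expect_def path_prob_def)
next
  case (Suc T)
  have "Ev (Suc T) S (\<lambda>s. 1) = (\<Sum>S1\<in>Pow V. Kh S S1 * Ev T S1 (\<lambda>s. 1))" by (rule expect_Suc)
  also have "\<dots> = (\<Sum>S1\<in>Pow V. Kh S S1)"
  proof (intro sum.cong refl)
    fix S1 assume S1: "S1 \<in> Pow V"
    show "Kh S S1 * Ev T S1 (\<lambda>s. 1) = Kh S S1"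
      using Suc.IH[of S1] S1 by (cases "S1 = {}") (auto simp: Kh_to_empty)
  qed
  also have "\<dots> = 1" using Kh_total Suc.prems by simp
  finally show ?case .
qed

lemma KW: "S1 \<in> Pow V \<Longrightarrow> Kh S0 S1 * Ev T S1 (\<lambda>s. 1) = Kh S0 S1"
  using W1[of S1 T] by (cases "S1 = {}") (auto simp: Kh_to_empty)

lemma W_nonneg: "Ev T S (\<lambda>s. 1) \<ge> 0"
  unfolding vb_expect_def by (simp add: sum_nonneg prob_nonneg)

end


lemma sum_lt_Suc_shift: "(\<Sum>j<Suc n. f j) = f 0 + (\<Sum>j<n. f (Suc j :: nat)) " for f :: "nat \<Rightarrow> real"
  by (induction n) (simp_all add: add.assoc)

context sgraph begin

definition adapted :: "nat \<Rightarrow> 'a set \<Rightarrow> ((nat \<Rightarrow> 'a set) \<Rightarrow> nat \<Rightarrow> 'a set \<Rightarrow> real) \<Rightarrow> bool" where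
  "adapted T S0 G \<longleftrightarrow> (\<forall>s\<in>paths V T S0. \<forall>s'\<in>paths V T S0. \<forall>j. (\<forall>i\<le>j. s i = s' i) \<longrightarrow> G s j = G s' j)"

lemma st_shift:
  assumes st: "bounded_stopping_time V (Suc T) S0 \<tau>" and nz: "\<forall>c\<in>paths V (Suc T) S0. \<tau> c \<noteq> 0"
    and S1: "S1 \<in> Pow V"
  shows "bounded_stopping_time V T S1 (\<lambda>s. \<tau> (pcons S0 s) - 1)"
  unfolding bounded_stopping_time_def
proof (intro conjI ballI allI impI)
  fix s assume s: "s \<in> paths V T S1"
  have "pcons S0 s \<in> paths V (Suc T) S0" by (rule pcons_in[OF S1 s])
  thus "\<tau> (pcons S0 s) - 1 \<le> T" using st unfolding bounded_stopping_time_def by force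
next
  fix s s' t assume s: "s \<in> paths V T S1" and s': "s' \<in> paths V T S1" and ag: "\<forall>i\<le>t. s i = s' i"
  have c: "pcons S0 s \<in> paths V (Suc T) S0" "pcons S0 s' \<in> paths V (Suc T) S0"
    using pcons_in[OF S1 s] pcons_in[OF S1 s'] by auto
  have ag': "\<forall>i\<le>Suc t. pcons S0 s i = pcons S0 s' i"
    using ag by (auto simp: pcons_def)
  have "\<tau> (pcons S0 s) = Suc t \<longleftrightarrow> \<tau> (pcons S0 s') = Suc t"
    using st c ag' unfolding bounded_stopping_time_def by blast
  moreover have "\<tau> (pcons S0 s) \<noteq> 0" "\<tau> (pcons S0 s') \<noteq> 0" using nz c by auto
  ultimately show "\<tau> (pcons S0 s) - 1 = t \<longleftrightarrow> \<tau> (pcons S0 s') - 1 = t" by auto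
qed

lemma adapted_shift:
  assumes ad: "adapted (Suc T) S0 G" and S1: "S1 \<in> Pow V"
  shows "adapted T S1 (\<lambda>s j. G (pcons S0 s) (Suc j))"
  unfolding adapted_def
proof (intro ballI allI impI)
  fix s s' j assume s: "s \<in> paths V T S1" and s': "s' \<in> paths V T S1" and ag: "\<forall>i\<le>j. s i = s' i"
  have c: "pcons S0 s \<in> paths V (Suc T) S0" "pcons S0 s' \<in> paths V (Suc T) S0"
    using pcons_in[OF S1 s] pcons_in[OF S1 s'] by auto
  have ag': "\<forall>i\<le>Suc j. pcons S0 s i = pcons S0 s' i"
    using ag by (auto simp: pcons_def)
  show "G (pcons S0 s) (Suc j) = G (pcons S0 s') (Suc j)"
    using ad c ag' unfolding adapted_def by blast
qed

lemma OS:
  assumes "S0 \<subseteq> V" "bounded_stopping_time V T S0 \<tau>" "adapted T S0 G"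
  shows "Ev T S0 (\<lambda>s. \<Sum>j<\<tau> s. G s j (s (Suc j))) = Ev T S0 (\<lambda>s. \<Sum>j<\<tau> s. \<Sum>S'\<in>Pow V. Kh (s j) S' * G s j S')"
  using assms
proof (induction T arbitrary: S0 \<tau> G)
  case 0
  have "\<tau> s = 0" if "s \<in> paths V 0 S0" for s
    using 0(2) that unfolding bounded_stopping_time_def by auto
  thus ?case by (intro Ev_cong) simp
next
  case (Suc T)
  show ?case
  proof (cases "\<exists>s\<in>paths V (Suc T) S0. \<tau> s = 0")
    case True
    then obtain s0 where s0: "s0 \<in> paths V (Suc T) S0" "\<tau> s0 = 0" by blast
    have "\<tau> s = 0" if s: "s \<in> paths V (Suc T) S0" for s
    proof -
      have "\<forall>i\<le>0. s0 i = s i" using paths_0[OF s0(1)] paths_0[OF s] by simp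
      thus ?thesis using Suc.prems(2) s0 s unfolding bounded_stopping_time_def by blast
    qed
    thus ?thesis by (intro Ev_cong) simp
  next
    case False
    hence nz: "\<forall>c\<in>paths V (Suc T) S0. \<tau> c \<noteq> 0" by auto
    obtain sp where sp: "sp \<in> paths V (Suc T) S0" using paths_ne by blast
    define g0 where "g0 = G sp 0"
    define h0 where "h0 = (\<Sum>S'\<in>Pow V. Kh S0 S' * g0 S')"
    define \<tau>' where "\<tau>' s = \<tau> (pcons S0 s) - 1" for s
    define G' where "G' s j = G (pcons S0 s) (Suc j)" for s j
    define L' where "L' s = (\<Sum>j<\<tau>' s. G' s j (s (Suc j)))" for s
    define R' where "R' s = (\<Sum>j<\<tau>' s. \<Sum>S'\<in>Pow V. Kh (s j) S' * G' s j S')" for s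
    have IH: "Ev T S1 L' = Ev T S1 R'" if S1: "S1 \<in> Pow V" for S1
      unfolding L'_def R'_def \<tau>'_def G'_def
      by (rule Suc.IH) (use S1 st_shift[OF Suc.prems(2) nz S1] adapted_shift[OF Suc.prems(3) S1] in auto)
    have key: "\<tau> (pcons S0 s) = Suc (\<tau>' s) \<and> G (pcons S0 s) 0 = g0"
      if S1: "S1 \<in> Pow V" and s: "s \<in> paths V T S1" for S1 s
    proof
      have c: "pcons S0 s \<in> paths V (Suc T) S0" by (rule pcons_in[OF S1 s])
      thus "\<tau> (pcons S0 s) = Suc (\<tau>' s)" using nz by (auto simp: \<tau>'_def)
      have "\<forall>i\<le>0. pcons S0 s i = sp i" using paths_0[OF sp] by simp
      thus "G (pcons S0 s) 0 = g0" using Suc.prems(3) c sp unfolding adapted_def g0_def by blast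
    qed
    have "Ev (Suc T) S0 (\<lambda>s. \<Sum>j<\<tau> s. G s j (s (Suc j)))
        = (\<Sum>S1\<in>Pow V. Kh S0 S1 * Ev T S1 (\<lambda>s. g0 S1 + L' s))"
      unfolding expect_Suc
    proof (intro sum.cong refl arg_cong2[where f="(*)"] Ev_cong)
      fix S1 s assume S1: "S1 \<in> Pow V" and s: "s \<in> paths V T S1"
      show "(\<Sum>j<\<tau> (pcons S0 s). G (pcons S0 s) j (pcons S0 s (Suc j))) = g0 S1 + L' s"
      proof -
        have t: "\<tau> (pcons S0 s) = Suc (\<tau>' s)" and g: "G (pcons S0 s) 0 = g0" using key[OF S1 s] by auto
        show ?thesis unfolding t sum_lt_Suc_shift using g paths_0[OF s] by (simp add: L'_def G'_def)
      qed
    qed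
    also have "\<dots> = (\<Sum>S1\<in>Pow V. Kh S0 S1 * g0 S1 + Kh S0 S1 * Ev T S1 L')"
    proof (intro sum.cong refl)
      fix S1 assume S1: "S1 \<in> Pow V"
      have "Kh S0 S1 * Ev T S1 (\<lambda>s. g0 S1 + L' s) = g0 S1 * (Kh S0 S1 * Ev T S1 (\<lambda>s. 1)) + Kh S0 S1 * Ev T S1 L'"
        by (subst Ev_add) (simp add: Ev_const[of T S1 "g0 S1"] algebra_simps)
      thus "Kh S0 S1 * Ev T S1 (\<lambda>s. g0 S1 + L' s) = Kh S0 S1 * g0 S1 + Kh S0 S1 * Ev T S1 L'"
        using KW[OF S1] by simp
    qed
    also have "\<dots> = h0 + (\<Sum>S1\<in>Pow V. Kh S0 S1 * Ev T S1 R')"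
      unfolding h0_def sum.distrib using IH by simp
    also have "\<dots> = (\<Sum>S1\<in>Pow V. Kh S0 S1 * h0 + Kh S0 S1 * Ev T S1 R')"
    proof -
      have "(\<Sum>S1\<in>Pow V. Kh S0 S1 * h0) = h0"
      proof (cases "S0 = {}")
        case True thus ?thesis by (simp add: Kh_empty h0_def)
      next
        case False thus ?thesis using Kh_total[OF Suc.prems(1) False] by (simp add: sum_distrib_right[symmetric])
      qed
      thus ?thesis by (simp add: sum.distrib)
    qed
    also have "\<dots> = (\<Sum>S1\<in>Pow V. Kh S0 S1 * Ev T S1 (\<lambda>s. h0 + R' s))"
    proof (intro sum.cong refl)
      fix S1 assume S1: "S1 \<in> Pow V"
      have "Kh S0 S1 * Ev T S1 (\<lambda>s. h0 + R' s) = h0 * (Kh S0 S1 * Ev T S1 (\<lambda>s. 1)) + Kh S0 S1 * Ev T S1 R'"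
        by (subst Ev_add) (simp add: Ev_const[of T S1 h0] algebra_simps)
      thus "Kh S0 S1 * h0 + Kh S0 S1 * Ev T S1 R' = Kh S0 S1 * Ev T S1 (\<lambda>s. h0 + R' s)"
        using KW[OF S1] by simp
    qed
    also have "\<dots> = Ev (Suc T) S0 (\<lambda>s. \<Sum>j<\<tau> s. \<Sum>S'\<in>Pow V. Kh (s j) S' * G s j S')"
      unfolding expect_Suc
    proof (intro sum.cong refl arg_cong2[where f="(*)"] Ev_cong)
      fix S1 s assume S1: "S1 \<in> Pow V" and s: "s \<in> paths V T S1"
      show "h0 + R' s = (\<Sum>j<\<tau> (pcons S0 s). \<Sum>S'\<in>Pow V. Kh (pcons S0 s j) S' * G (pcons S0 s) j S')"
      proof -
        have t: "\<tau> (pcons S0 s) = Suc (\<tau>' s)" and g: "G (pcons S0 s) 0 = g0" using key[OF S1 s] by auto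
        show ?thesis unfolding t sum_lt_Suc_shift using g by (simp add: R'_def G'_def h0_def)
      qed
    qed
    finally show ?thesis .
  qed
qed

end


context sgraph begin

lemma cost_Suc: "cost V E s (Suc j) = cost V E s j + (vol V E (symdiff (s (Suc j)) (s j)) + bdry V E (s j))"
  unfolding cost_def by simp

lemma cost_nonneg: "cost V E s j \<ge> 0"
  unfolding cost_def by (intro add_nonneg_nonneg sum_nonneg vol_nonneg bdry_nonneg)

lemma cost_adapted: "(\<forall>i\<le>j. s i = s' i) \<Longrightarrow> cost V E s j = cost V E s' j" for s s' :: "nat \<Rightarrow> 'a set"
  unfolding cost_def by (intro arg_cong2[where f="(+)"] sum.cong) auto

lemma main:
  assumes S0: "S0 \<subseteq> V" "S0 \<noteq> {}" and st: "bounded_stopping_time V T S0 \<tau>"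
  shows "Ev T S0 (\<lambda>s. cost V E s (\<tau> s) / vol V E (s (\<tau> s))) \<le> 1 + 4 * sqrt (real T * ln (vol V E V))"
proof -
  define ph where "ph S = bdry V E S / vol V E S" for S
  have ph0: "ph S \<ge> 0" for S by (simp add: ph_def bdry_nonneg vol_nonneg)
  have tle: "\<tau> s \<le> T" if "s \<in> paths V T S0" for s using st that unfolding bounded_stopping_time_def by auto
  have sub: "s j \<subseteq> V" if "s \<in> paths V T S0" "j \<le> T" for s j using paths_sub[OF that(1) S0(1) that(2)] .
  have W: "Ev T S0 (\<lambda>s. 1) = 1" by (rule W1[OF S0])
  have vS0: "vol V E S0 \<ge> 1" by (rule vol_ge1[OF S0])
  have vV: "vol V E V \<ge> vol V E S0" by (rule vol_mono[OF S0(1)]) simp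
  define Gc where "Gc s j S' = cost V E s j * (1 / vol V E S' - 1 / vol V E (s j)) + (vol V E (symdiff S' (s j)) + bdry V E (s j)) / vol V E S'" for s j S'
  have adc: "adapted T S0 Gc"
    unfolding adapted_def
  proof (intro ballI allI impI)
    fix s s' :: "nat \<Rightarrow> 'a set" and j :: nat assume ag: "\<forall>i\<le>j. s i = s' i"
    have "cost V E s j = cost V E s' j" by (rule cost_adapted[OF ag])
    moreover have "s j = s' j" using ag by simp
    ultimately show "Gc s j = Gc s' j" by (intro ext) (simp add: Gc_def)
  qed
  have tele: "cost V E s (\<tau> s) / vol V E (s (\<tau> s)) = 1 + (\<Sum>j<\<tau> s. Gc s j (s (Suc j)))"
    if s: "s \<in> paths V T S0" for s
  proof -
    define M where "M j = cost V E s j / vol V E (s j)" for j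
    have "Gc s j (s (Suc j)) = M (Suc j) - M j" for j
      unfolding Gc_def M_def cost_Suc by (simp add: add_divide_distrib right_diff_distrib)
    hence "(\<Sum>j<\<tau> s. Gc s j (s (Suc j))) = M (\<tau> s) - M 0" by (simp add: sum_lessThan_telescope)
    moreover have "M 0 = 1" using paths_0[OF s] vS0 by (simp add: M_def cost_def)
    ultimately show ?thesis by (simp add: M_def)
  qed
  have A: "Ev T S0 (\<lambda>s. cost V E s (\<tau> s) / vol V E (s (\<tau> s))) \<le> 1 + 2 * Ev T S0 (\<lambda>s. \<Sum>j<\<tau> s. ph (s j))"
  proof -
    have "Ev T S0 (\<lambda>s. cost V E s (\<tau> s) / vol V E (s (\<tau> s))) = Ev T S0 (\<lambda>s. 1 + (\<Sum>j<\<tau> s. Gc s j (s (Suc j))))"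
      using tele by (rule Ev_cong)
    also have "\<dots> = 1 + Ev T S0 (\<lambda>s. \<Sum>j<\<tau> s. Gc s j (s (Suc j)))" using Ev_add W by simp
    also have "Ev T S0 (\<lambda>s. \<Sum>j<\<tau> s. Gc s j (s (Suc j))) = Ev T S0 (\<lambda>s. \<Sum>j<\<tau> s. \<Sum>S'\<in>Pow V. Kh (s j) S' * Gc s j S')"
      by (rule OS[OF S0(1) st adc])
    also have "\<dots> \<le> Ev T S0 (\<lambda>s. 2 * (\<Sum>j<\<tau> s. ph (s j)))"
    proof (rule Ev_mono)
      fix s assume s: "s \<in> paths V T S0"
      have "(\<Sum>j<\<tau> s. \<Sum>S'\<in>Pow V. Kh (s j) S' * Gc s j S') \<le> (\<Sum>j<\<tau> s. 2 * ph (s j))"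
      proof (rule sum_mono)
        fix j assume "j \<in> {..<\<tau> s}"
        hence "j \<le> T" using tle[OF s] by auto
        thus "(\<Sum>S'\<in>Pow V. Kh (s j) S' * Gc s j S') \<le> 2 * ph (s j)"
          unfolding Gc_def ph_def by (intro step_A sub[OF s] cost_nonneg)
      qed
      thus "(\<Sum>j<\<tau> s. \<Sum>S'\<in>Pow V. Kh (s j) S' * Gc s j S') \<le> 2 * (\<Sum>j<\<tau> s. ph (s j))"
        by (simp add: sum_distrib_left)
    qed
    also have "\<dots> = 2 * Ev T S0 (\<lambda>s. \<Sum>j<\<tau> s. ph (s j))" by (rule Ev_cmult)
    finally show ?thesis by simp
  qed
  define Q where "Q s = (\<Sum>j<\<tau> s. (ph (s j))\<^sup>2)" for s
  define G2 where "G2 (s :: nat \<Rightarrow> 'a set) j S' = ln (vol V E S') - ln (vol V E (s j))" for s j S'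
  have ad2: "adapted T S0 G2"
    unfolding adapted_def
  proof (intro ballI allI impI)
    fix s s' :: "nat \<Rightarrow> 'a set" and j :: nat assume ag: "\<forall>i\<le>j. s i = s' i"
    hence "s j = s' j" by simp
    thus "G2 s j = G2 s' j" by (intro ext) (simp add: G2_def)
  qed
  have B: "Ev T S0 Q \<le> 4 * ln (vol V E V)"
  proof -
    have "Ev T S0 Q \<le> Ev T S0 (\<lambda>s. 4 * (\<Sum>j<\<tau> s. \<Sum>S'\<in>Pow V. Kh (s j) S' * G2 s j S'))"
    proof (rule Ev_mono)
      fix s assume s: "s \<in> paths V T S0"
      have "Q s \<le> (\<Sum>j<\<tau> s. 4 * (\<Sum>S'\<in>Pow V. Kh (s j) S' * G2 s j S'))"
        unfolding Q_def
      proof (rule sum_mono)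
        fix j assume "j \<in> {..<\<tau> s}"
        hence "j \<le> T" using tle[OF s] by auto
        hence "(bdry V E (s j) / vol V E (s j))\<^sup>2 / 4 \<le> (\<Sum>S'\<in>Pow V. Kh (s j) S' * (ln (vol V E S') - ln (vol V E (s j))))"
          by (intro step_B sub[OF s])
        thus "(ph (s j))\<^sup>2 \<le> 4 * (\<Sum>S'\<in>Pow V. Kh (s j) S' * G2 s j S')"
          unfolding G2_def ph_def by linarith
      qed
      thus "Q s \<le> 4 * (\<Sum>j<\<tau> s. \<Sum>S'\<in>Pow V. Kh (s j) S' * G2 s j S')"
        by (simp add: sum_distrib_left)
    qed
    also have "\<dots> = 4 * Ev T S0 (\<lambda>s. \<Sum>j<\<tau> s. \<Sum>S'\<in>Pow V. Kh (s j) S' * G2 s j S')" by (rule Ev_cmult)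
    also have "Ev T S0 (\<lambda>s. \<Sum>j<\<tau> s. \<Sum>S'\<in>Pow V. Kh (s j) S' * G2 s j S') = Ev T S0 (\<lambda>s. \<Sum>j<\<tau> s. G2 s j (s (Suc j)))"
      by (rule OS[OF S0(1) st ad2, symmetric])
    also have "\<dots> \<le> Ev T S0 (\<lambda>s. ln (vol V E V))"
    proof (rule Ev_mono)
      fix s assume s: "s \<in> paths V T S0"
      have "(\<Sum>j<\<tau> s. G2 s j (s (Suc j))) = ln (vol V E (s (\<tau> s))) - ln (vol V E (s 0))"
        unfolding G2_def by (rule sum_lessThan_telescope)
      also have "\<dots> \<le> ln (vol V E (s (\<tau> s)))" using paths_0[OF s] vS0 by simp
      also have "\<dots> \<le> ln (vol V E V)"
      proof (cases "vol V E (s (\<tau> s)) = 0")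
        case True thus ?thesis using vV vS0 by simp
      next
        case False
        hence "vol V E (s (\<tau> s)) > 0" using vol_nonneg[of "s (\<tau> s)"] by simp
        moreover have "vol V E (s (\<tau> s)) \<le> vol V E V" using vol_mono[OF sub[OF s tle[OF s]]] by simp
        ultimately show ?thesis by simp
      qed
      finally show "(\<Sum>j<\<tau> s. G2 s j (s (Suc j))) \<le> ln (vol V E V)" .
    qed
    also have "Ev T S0 (\<lambda>s. ln (vol V E V)) = ln (vol V E V)" using Ev_const[of T S0 "ln (vol V E V)"] W by simp
    finally show ?thesis by simp
  qed
  have C1: "Ev T S0 (\<lambda>s. \<Sum>j<\<tau> s. ph (s j)) \<le> sqrt (real T) * Ev T S0 (\<lambda>s. sqrt (Q s))"
  proof -
    have "Ev T S0 (\<lambda>s. \<Sum>j<\<tau> s. ph (s j)) \<le> Ev T S0 (\<lambda>s. sqrt (real T) * sqrt (Q s))"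
    proof (rule Ev_mono)
      fix s assume s: "s \<in> paths V T S0"
      have "(\<Sum>j<\<tau> s. ph (s j)) = (\<Sum>j<\<tau> s. 1 * sqrt ((ph (s j))\<^sup>2))" using ph0 by simp
      also have "\<dots> \<le> sqrt ((\<Sum>j<\<tau> s. 1) * (\<Sum>j<\<tau> s. 1 * (ph (s j))\<^sup>2))"
        by (rule cs_sqrt) auto
      also have "\<dots> = sqrt (real (\<tau> s) * Q s)" by (simp add: Q_def)
      also have "\<dots> \<le> sqrt (real T * Q s)"
        using tle[OF s] by (intro real_sqrt_le_mono mult_right_mono) (auto simp: Q_def sum_nonneg)
      finally show "(\<Sum>j<\<tau> s. ph (s j)) \<le> sqrt (real T) * sqrt (Q s)" by (simp add: real_sqrt_mult)
    qed
    thus ?thesis by (simp add: Ev_cmult)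
  qed
  have C2: "Ev T S0 (\<lambda>s. sqrt (Q s)) \<le> sqrt (Ev T S0 Q)"
  proof -
    have "Ev T S0 (\<lambda>s. sqrt (Q s)) \<le> sqrt ((\<Sum>s\<in>paths V T S0. path_prob V E T s) * (\<Sum>s\<in>paths V T S0. path_prob V E T s * Q s))"
      unfolding vb_expect_def by (rule cs_sqrt) (auto simp: prob_nonneg Q_def sum_nonneg)
    moreover have "(\<Sum>s\<in>paths V T S0. path_prob V E T s) = 1" using W by (simp add: vb_expect_def)
    ultimately show ?thesis by (simp add: vb_expect_def)
  qed
  have "Ev T S0 (\<lambda>s. cost V E s (\<tau> s) / vol V E (s (\<tau> s))) \<le> 1 + 2 * (sqrt (real T) * sqrt (4 * ln (vol V E V)))"
  proof -
    have "sqrt (Ev T S0 Q) \<le> sqrt (4 * ln (vol V E V))" using B by (rule real_sqrt_le_mono)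
    hence "Ev T S0 (\<lambda>s. sqrt (Q s)) \<le> sqrt (4 * ln (vol V E V))" using C2 by linarith
    hence "sqrt (real T) * Ev T S0 (\<lambda>s. sqrt (Q s)) \<le> sqrt (real T) * sqrt (4 * ln (vol V E V))"
      by (rule mult_left_mono) simp
    thus ?thesis using A C1 by linarith
  qed
  also have "sqrt (real T) * sqrt (4 * ln (vol V E V)) = 2 * sqrt (real T * ln (vol V E V))"
    by (simp add: real_sqrt_mult)
  finally show ?thesis by simp
qed

end

theorem theorem5:
  fixes V :: "'a set" and E :: "'a \<Rightarrow> 'a \<Rightarrow> bool" and S0 :: "'a set"
    and T :: nat and \<tau> :: "(nat \<Rightarrow> 'a set) \<Rightarrow> nat"
  assumes "simple_graph V E"
    and "\<forall>x\<in>V. deg V E x > 0"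
    and "S0 \<subseteq> V" and "S0 \<noteq> {}"
    and "bounded_stopping_time V T S0 \<tau>"
  shows "vb_expect V E T S0 (\<lambda>s. cost V E s (\<tau> s) / vol V E (s (\<tau> s)))
           \<le> 1 + 4 * sqrt (real T * ln (vol V E V))"
proof -
  interpret sgraph V E using assms(1,2) by unfold_locales
  show ?thesis by (rule main[OF assms(3,4,5)])
qed


end
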